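(* Let $E$ and $B$ be weakly compact JB$^*$-triples neither of which contains a direct summand of rank smaller than or equal to $3$, or let $E$ and $B$ be compact C$^*$-algebras, and let $f:S(E)\to S(B)$ be a surjective isometry. Let $e_1,e_2$ be two orthogonal finite rank tripotents in $E$, and for $j=1,2$ let $T_{e_j}:E_0(e_j)\to B_0(f(e_j))$ be the surjective real linear isometry satisfying $f(e_j+x)=f(e_j)+T_{e_j}(x)$ for every $x$ in the closed unit ball of $E_0(e_j)$. Then $T_{e_1}(x)=T_{e_2}(x)$ for all $x\in E_0(e_1)\cap E_0(e_2)$.
   Context: A JB$^*$-triple is a complex Banach space $E$ with a continuous triple product $\{\cdot,\cdot,\cdot\}$, bilinear and symmetric in the outer variables and conjugate linear in the middle one, such that, with $L(a,b)z=\{a,b,z\}$: $L(a,b)L(x,y)-L(x,y)L(a,b)=L(L(a,b)x,y)-L(x,L(b,a)y)$; $L(a,a)$ is hermitian with non-negative spectrum; $\|\{a,a,a\}\|=\|a\|^3$. A tripotent $e$ satisfies $\{e,e,e\}=e$; $E_i(e)$ ($i=0,1,2$) is the $\frac i2$-eigenspace of $L(e,e)$; $e$ is minimal if $E_2(e)=\mathbb{C}e\ne\{0\}$; $a\perp b$ means $L(a,b)=0$; a finite rank tripotent is a finite sum of mutually orthogonal minimal tripotents. For such $f$ and finite rank $e$, $f(e)$ is a finite rank tripotent of $B$ and a surjective real linear isometry $T_e$ as described exists. The rank of $E$ is the minimal cardinal $r$ with $\mathrm{card}(S)\le r$ for every set $S\not\ni0$ of pairwise orthogonal elements. $E$ is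 weakly compact if $z\mapsto\{x,z,x\}$ is weakly compact for every $x$. $E$ contains a direct summand of rank $\le3$ if $E=D\oplus D'$ with closed subspaces $D\ne\{0\}$, $D'$, elementwise orthogonal, $D$ of rank $\le3$. A compact C$^*$-algebra is a $c_0$-sum of algebras $K(H_i)$, with triple product $\{a,b,c\}=\frac12(ab^*c+cb^*a)$. $S(X)$ is the unit sphere; a surjective isometry is a distance preserving surjection. *)

theory Defs
  imports "HOL-Analysis.Analysis"
begin

text \<open>A complex Banach space is modelled as a real Banach space together with the
  real linear map J (multiplication by the imaginary unit).\<close>

definition cmul :: "('a::real_vector \<Rightarrow> 'a) \<Rightarrow> complex \<Rightarrow> 'a \<Rightarrow> 'a" where
  "cmul J c x = Re c *\<^sub>R x + Im c *\<^sub>R J x"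

definition complex_structure :: "('a::real_normed_vector \<Rightarrow> 'a) \<Rightarrow> bool" where
  "complex_structure J \<longleftrightarrow> linear J \<and> (\<forall>x. J (J x) = - x)
     \<and> (\<forall>c x. norm (cmul J c x) = cmod c * norm x)"

definition csubspace :: "('a::real_vector \<Rightarrow> 'a) \<Rightarrow> 'a set \<Rightarrow> bool" where
  "csubspace J D \<longleftrightarrow> subspace D \<and> (\<forall>x\<in>D. J x \<in> D)"

definition complex_functional :: "('a::real_vector \<Rightarrow> 'a) \<Rightarrow> ('a \<Rightarrow> complex) \<Rightarrow> bool" where
  "complex_functional J \<phi> \<longleftrightarrow> linear \<phi> \<and> (\<forall>x. \<phi> (J x) = \<i> * \<phi> x)"

definition op_spectrum :: "('a::real_vector \<Rightarrow> 'a) \<Rightarrow> ('a \<Rightarrow> 'a) \<Rightarrow> complex set" where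
  "op_spectrum J S = {w. \<not> bij (\<lambda>x. S x - cmul J w x)}"

text \<open>Hermitian operator (Lumer/Vidav): its numerical range is real.\<close>
definition hermitian :: "('a::real_normed_vector \<Rightarrow> 'a) \<Rightarrow> ('a \<Rightarrow> 'a) \<Rightarrow> bool" where
  "hermitian J S \<longleftrightarrow> (\<forall>x \<phi>. norm x = 1 \<and> complex_functional J \<phi> \<and> (\<forall>y. cmod (\<phi> y) \<le> norm y)
      \<and> \<phi> x = 1 \<longrightarrow> Im (\<phi> (S x)) = 0)"

definition jbstar_triple :: "('a::banach \<Rightarrow> 'a) \<Rightarrow> ('a \<Rightarrow> 'a \<Rightarrow> 'a \<Rightarrow> 'a) \<Rightarrow> bool" where
  "jbstar_triple J T \<longleftrightarrow>
     complex_structure J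
   \<and> continuous_on UNIV (\<lambda>(a, b, c). T a b c)
   \<and> (\<forall>b c. linear (\<lambda>a. T a b c)) \<and> (\<forall>a c. linear (\<lambda>b. T a b c))
   \<and> (\<forall>a b c. T a b c = T c b a)
   \<and> (\<forall>a b c. T (J a) b c = J (T a b c))
   \<and> (\<forall>a b c. T a (J b) c = - J (T a b c))
   \<and> (\<forall>a b x y z. T a b (T x y z) - T x y (T a b z) = T (T a b x) y z - T x (T b a y) z)
   \<and> (\<forall>a. hermitian J (T a a) \<and> op_spectrum J (T a a) \<subseteq> {z. Im z = 0 \<and> 0 \<le> Re z})
   \<and> (\<forall>a. norm (T a a a) = norm a ^ 3)"

definition tripotent :: "('a \<Rightarrow> 'a \<Rightarrow> 'a \<Rightarrow> 'a) \<Rightarrow> 'a \<Rightarrow> bool" where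
  "tripotent T e \<longleftrightarrow> T e e e = e"

definition peirce :: "('a::real_vector \<Rightarrow> 'a \<Rightarrow> 'a \<Rightarrow> 'a) \<Rightarrow> 'a \<Rightarrow> nat \<Rightarrow> 'a set" where
  "peirce T e k = {x. T e e x = (real k / 2) *\<^sub>R x}"

definition orth :: "('a \<Rightarrow> 'a \<Rightarrow> 'a \<Rightarrow> 'a::zero) \<Rightarrow> 'a \<Rightarrow> 'a \<Rightarrow> bool" where
  "orth T a b \<longleftrightarrow> (\<forall>z. T a b z = 0)"

definition minimal_tripotent :: "('a::real_vector \<Rightarrow> 'a) \<Rightarrow> ('a \<Rightarrow> 'a \<Rightarrow> 'a \<Rightarrow> 'a) \<Rightarrow> 'a \<Rightarrow> bool" where
  "minimal_tripotent J T e \<longleftrightarrow> tripotent T e \<and> peirce T e 2 = range (\<lambda>c. cmul J c e)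
      \<and> peirce T e 2 \<noteq> {0}"

definition finite_rank_tripotent :: "('a::real_vector \<Rightarrow> 'a) \<Rightarrow> ('a \<Rightarrow> 'a \<Rightarrow> 'a \<Rightarrow> 'a) \<Rightarrow> 'a \<Rightarrow> bool" where
  "finite_rank_tripotent J T e \<longleftrightarrow> (\<exists>S. finite S \<and> S \<noteq> {} \<and> (\<forall>u\<in>S. minimal_tripotent J T u)
      \<and> (\<forall>u\<in>S. \<forall>v\<in>S. u \<noteq> v \<longrightarrow> orth T u v) \<and> e = \<Sum>S)"

definition rank_le3 :: "('a \<Rightarrow> 'a \<Rightarrow> 'a \<Rightarrow> 'a::zero) \<Rightarrow> 'a set \<Rightarrow> bool" where
  "rank_le3 T D \<longleftrightarrow> (\<forall>S. S \<subseteq> D \<and> 0 \<notin> S \<and> (\<forall>a\<in>S. \<forall>b\<in>S. a \<noteq> b \<longrightarrow> orth T a b)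
      \<longrightarrow> finite S \<and> card S \<le> 3)"

definition has_small_summand :: "('a::real_normed_vector \<Rightarrow> 'a) \<Rightarrow> ('a \<Rightarrow> 'a \<Rightarrow> 'a \<Rightarrow> 'a) \<Rightarrow> bool" where
  "has_small_summand J T \<longleftrightarrow> (\<exists>D D'. csubspace J D \<and> csubspace J D' \<and> closed D \<and> closed D'
      \<and> D \<noteq> {0} \<and> D \<inter> D' = {0} \<and> (\<forall>x. \<exists>d\<in>D. \<exists>d'\<in>D'. x = d + d')
      \<and> (\<forall>a\<in>D. \<forall>b\<in>D'. orth T a b) \<and> rank_le3 T D)"

definition weak_topology :: "'a::real_normed_vector topology" where
  "weak_topology = topology_generated_by
     {{x. \<phi> x \<in> U} | (\<phi> :: 'a \<Rightarrow> real) U. bounded_linear \<phi> \<and> open U}"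

definition weakly_compact_map :: "('a::real_normed_vector \<Rightarrow> 'a) \<Rightarrow> bool" where
  "weakly_compact_map R \<longleftrightarrow>
     (\<forall>A. bounded A \<longrightarrow> compactin weak_topology (weak_topology closure_of (R ` A)))"

definition weakly_compact_triple :: "('a::real_normed_vector \<Rightarrow> 'a \<Rightarrow> 'a \<Rightarrow> 'a) \<Rightarrow> bool" where
  "weakly_compact_triple T \<longleftrightarrow> (\<forall>x. weakly_compact_map (\<lambda>z. T x z x))"

definition hilbert_cstruct :: "('h::{real_inner,complete_space} \<Rightarrow> 'h) \<Rightarrow> bool" where
  "hilbert_cstruct J \<longleftrightarrow> linear J \<and> (\<forall>x. J (J x) = - x) \<and> (\<forall>x y. inner (J x) (J y) = inner x y)"

text \<open>K(H0) for a closed complex subspace H0 of the Hilbert space: compact complex linear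
  operators on H0, represented as operators on the whole space that map into H0 and vanish on
  the orthogonal complement of H0.\<close>
definition compact_ops :: "('h::{real_inner,complete_space} \<Rightarrow> 'h) \<Rightarrow> 'h set \<Rightarrow> ('h \<Rightarrow> 'h) set" where
  "compact_ops J H0 = {S. linear S \<and> (\<forall>x. S (J x) = J (S x)) \<and> (\<forall>x. S x \<in> H0)
      \<and> (\<forall>x. (\<forall>y\<in>H0. inner x y = 0) \<longrightarrow> S x = 0) \<and> compact (closure (S ` ball 0 1))}"

definition adjoint_op :: "('h::real_inner \<Rightarrow> 'h) \<Rightarrow> 'h \<Rightarrow> 'h" where
  "adjoint_op S = (SOME S'. \<forall>x y. inner (S x) y = inner x (S' y))"

definition c0_sum :: "('h::{real_inner,complete_space} \<Rightarrow> 'h) \<Rightarrow> ('i \<Rightarrow> 'h set) \<Rightarrow> ('i \<Rightarrow> 'h \<Rightarrow> 'h) set" where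
  "c0_sum J H = {x. (\<forall>i. x i \<in> compact_ops J (H i)) \<and> (\<forall>\<epsilon>>0. finite {i. \<epsilon> \<le> onorm (x i)})}"

text \<open>(J, T) is (isometrically triple-isomorphic, via a complex linear surjective isometry,
  to) the compact C*-algebra c_0-sum of K(H i), with triple product (ab*c+cb*a)/2.\<close>
definition compact_cstar ::
  "('a::real_normed_vector \<Rightarrow> 'a) \<Rightarrow> ('a \<Rightarrow> 'a \<Rightarrow> 'a \<Rightarrow> 'a) \<Rightarrow>
   ('h::{real_inner,complete_space} \<Rightarrow> 'h) \<Rightarrow> ('i \<Rightarrow> 'h set) \<Rightarrow> ('a \<Rightarrow> 'i \<Rightarrow> 'h \<Rightarrow> 'h) \<Rightarrow> bool" where
  "compact_cstar J T Jh H \<Phi> \<longleftrightarrow>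
     hilbert_cstruct Jh \<and> (\<forall>i. csubspace Jh (H i) \<and> closed (H i))
   \<and> bij_betw \<Phi> UNIV (c0_sum Jh H)
   \<and> (\<forall>a b. \<Phi> (a + b) = (\<lambda>i z. \<Phi> a i z + \<Phi> b i z))
   \<and> (\<forall>r a. \<Phi> (r *\<^sub>R a) = (\<lambda>i z. r *\<^sub>R \<Phi> a i z))
   \<and> (\<forall>a. \<Phi> (J a) = (\<lambda>i z. Jh (\<Phi> a i z)))
   \<and> (\<forall>a. norm a = (SUP i. onorm (\<Phi> a i)))
   \<and> (\<forall>a b c. \<Phi> (T a b c) = (\<lambda>i z. (1/2) *\<^sub>R
          (\<Phi> a i (adjoint_op (\<Phi> b i) (\<Phi> c i z)) + \<Phi> c i (adjoint_op (\<Phi> b i) (\<Phi> a i z)))))"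

end

theory Submission
  imports Defs
begin

lemma parallelogram:
  fixes u v :: "'h::real_inner"
  shows "norm (u - v)^2 + norm (u + v)^2 = 2 * norm u ^2 + 2 * norm v ^2"
  by (simp add: power2_norm_eq_inner inner_add inner_diff inner_commute algebra_simps)

lemma quad_nonneg_zero:
  fixes a b :: real
  assumes "b \<ge> 0" and "\<And>t. 2*t*a + t^2*b \<ge> 0"
  shows "a = 0"
proof -
  define t where "t = -a/(b+1)"
  have tb: "t*(b+1) = -a" using assms(1) by (simp add: t_def)
  have "0 \<le> (2*t*a + t^2*b) * (b+1)^2" using assms(2)[of t] by simp
  also have "(2*t*a + t^2*b) * (b+1)^2 = 2*a*(t*(b+1))*(b+1) + b*(t*(b+1))^2"
    by (simp add: power2_eq_square algebra_simps)
  also have "\<dots> = - (a^2 * (b+2))" unfolding tb by (simp add: power2_eq_square algebra_simps)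
  finally have "a^2 * (b + 2) \<le> 0" by simp
  then have "a^2 \<le> 0" using assms(1)
    by (smt (verit) mult_nonneg_nonneg zero_le_power2 mult_le_0_iff)
  then show ?thesis by simp
qed

lemma riesz:
  fixes \<phi> :: "'h::{real_inner,complete_space} \<Rightarrow> real"
  assumes bl: "bounded_linear \<phi>"
  shows "\<exists>w. \<forall>x. \<phi> x = inner w x"
proof (cases "\<forall>x. \<phi> x = 0")
  case True
  then show ?thesis by (intro exI[of _ 0]) simp
next
  case False
  then obtain x0 where x0: "\<phi> x0 \<noteq> 0" by blast
  interpret bounded_linear \<phi> by (rule bl)
  define C where "C = {x. \<phi> x = 1}"
  have x0C: "x0 /\<^sub>R \<phi> x0 \<in> C" using x0 by (simp add: C_def scale)
  define d where "d = Inf (norm ` C)"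
  have bdd: "bdd_below (norm ` C)" by (intro bdd_belowI[of _ 0]) auto
  have dle: "\<And>v. v \<in> C \<Longrightarrow> d \<le> norm v" unfolding d_def using bdd by (auto intro: cInf_lower)
  have d0: "d \<ge> 0" using dle[OF x0C] unfolding d_def
    by (metis (no_types, lifting) bdd cInf_greatest empty_iff image_iff image_is_empty norm_ge_zero x0C)
  have "\<forall>n::nat. \<exists>x\<in>C. norm x < d + 1/(real n + 1)"
  proof
    fix n :: nat
    have "Inf (norm ` C) < d + 1/(real n + 1)" unfolding d_def by (simp add: add_pos_nonneg)
    then obtain y where "y \<in> norm ` C" "y < d + 1/(real n + 1)"
      using cInf_lessD[of "norm ` C"] x0C by blast
    then show "\<exists>x\<in>C. norm x < d + 1/(real n + 1)" by auto
  qed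
  then obtain x where xC: "\<And>n. x n \<in> C" and xn: "\<And>n. norm (x n) < d + 1/(real n + 1)"
    by metis
  have key: "\<And>m n. norm (x m - x n)^2 \<le> 8*d/(real (min m n) + 1) + 4/(real (min m n) + 1)^2"
  proof -
    fix m n
    let ?e = "1/(real (min m n) + 1)"
    have e0: "?e > 0" by (simp add: add_pos_nonneg)
    have em: "1/(real m + 1) \<le> ?e" and en: "1/(real n + 1) \<le> ?e"
      by (auto intro!: divide_left_mono simp: add_pos_nonneg)
    have um: "norm (x m) \<le> d + ?e" using xn[of m] em by linarith
    have un: "norm (x n) \<le> d + ?e" using xn[of n] en by linarith
    have "(1/2) *\<^sub>R (x m + x n) \<in> C" using xC[of m] xC[of n] by (simp add: C_def add scale)
    then have "d \<le> norm ((1/2) *\<^sub>R (x m + x n))" by (rule dle)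
    then have s: "2*d \<le> norm (x m + x n)" by simp
    have s2: "4*d^2 \<le> norm (x m + x n)^2"
      using s d0 by (smt (verit) power_mono power_mult_distrib four_x_squared)
    have "norm (x m)^2 \<le> (d + ?e)^2" using um by (intro power_mono) auto
    moreover have "norm (x n)^2 \<le> (d + ?e)^2" using un by (intro power_mono) auto
    ultimately have "norm (x m - x n)^2 \<le> 4 * (d + ?e)^2 - 4*d^2"
      using parallelogram[of "x m" "x n"] s2 by linarith
    also have "\<dots> = 8*d*?e + 4*?e^2" by (simp add: power2_eq_square algebra_simps)
    finally show "norm (x m - x n)^2 \<le> 8*d/(real (min m n) + 1) + 4/(real (min m n) + 1)^2"
      by (simp add: power_divide)
  qed
  have cau: "Cauchy x"
  proof (rule metric_CauchyI)
    fix \<epsilon> :: real assume \<epsilon>: "\<epsilon> > 0"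
    obtain N :: nat where N: "real N > (8*d + 4) / \<epsilon>^2" using reals_Archimedean2 by blast
    show "\<exists>M. \<forall>m\<ge>M. \<forall>n\<ge>M. dist (x m) (x n) < \<epsilon>"
    proof (intro exI allI impI)
      fix m n assume m: "m \<ge> N" and n: "n \<ge> N"
      let ?k = "real (min m n) + 1"
      have k1: "?k \<ge> 1" by simp
      have kN: "?k > (8*d + 4) / \<epsilon>^2" using N m n by linarith
      have "norm (x m - x n)^2 \<le> 8*d/?k + 4/?k^2" by (rule key)
      also have "4/?k^2 \<le> 4/?k" using k1
        by (intro divide_left_mono) (auto simp: power2_eq_square)
      then have "8*d/?k + 4/?k^2 \<le> (8*d + 4)/?k" by (simp add: add_divide_distrib)
      also have "(8*d + 4)/?k < \<epsilon>^2" using kN \<epsilon> k1 d0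
        by (simp add: field_simps)
      finally have "norm (x m - x n)^2 < \<epsilon>^2" by simp
      then show "dist (x m) (x n) < \<epsilon>" using \<epsilon>
        by (simp add: dist_norm power_less_imp_less_base less_le)
    qed
  qed
  then obtain w where lim: "x \<longlonglongrightarrow> w" using convergent_eq_Cauchy by blast
  have "(\<lambda>n. \<phi> (x n)) \<longlonglongrightarrow> \<phi> w" by (rule tendsto[OF lim])
  moreover have "(\<lambda>n. \<phi> (x n)) = (\<lambda>n. 1)" using xC by (simp add: C_def)
  ultimately have wC: "\<phi> w = 1" using LIMSEQ_unique tendsto_const by metis
  have "(\<lambda>n. norm (x n)) \<longlonglongrightarrow> norm w" by (rule tendsto_norm[OF lim])
  moreover have "(\<lambda>n. d + 1/(real n + 1)) \<longlonglongrightarrow> d + 0"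
  proof (intro tendsto_add tendsto_const)
    have "(\<lambda>n. 1/(real n + 1)) = (\<lambda>n. inverse (real (Suc n)))"
      by (simp add: inverse_eq_divide add.commute)
    then show "(\<lambda>n. 1/(real n + 1)) \<longlonglongrightarrow> 0" using LIMSEQ_inverse_real_of_nat by simp
  qed
  ultimately have nw: "norm w \<le> d"
    using xn by (intro LIMSEQ_le) (auto intro: less_imp_le)
  have orth: "\<And>k. \<phi> k = 0 \<Longrightarrow> inner w k = 0"
  proof -
    fix k assume k: "\<phi> k = 0"
    show "inner w k = 0"
    proof (rule quad_nonneg_zero[of "norm k ^2"])
      show "norm k ^2 \<ge> 0" by simp
      fix t :: real
      have "w + t *\<^sub>R k \<in> C" using wC k by (simp add: C_def add scale)
      then have "norm w \<le> norm (w + t *\<^sub>R k)" using dle nw by force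
      then have "norm w ^2 \<le> norm (w + t *\<^sub>R k)^2" by (intro power_mono) auto
      moreover have "norm (w + t *\<^sub>R k)^2 = norm w^2 + 2*t*inner w k + t^2 * norm k^2"
        unfolding power2_norm_eq_inner by (simp add: inner_add inner_commute algebra_simps power2_eq_square)
      ultimately show "2*t*inner w k + t^2 * norm k ^2 \<ge> 0" by linarith
    qed
  qed
  have ww: "inner w w > 0" using wC by (metis inner_gt_zero_iff zero one_neq_zero)
  show ?thesis
  proof (intro exI allI)
    fix y
    have "\<phi> (y - \<phi> y *\<^sub>R w) = 0" using wC by (simp add: diff scale)
    then have "inner w (y - \<phi> y *\<^sub>R w) = 0" by (rule orth)
    then have "inner w y = \<phi> y * inner w w" by (simp add: inner_diff)
    then show "\<phi> y = inner (w /\<^sub>R inner w w) y" using ww by simp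
  qed
qed


definition has_adj :: "('h::real_inner \<Rightarrow> 'h) \<Rightarrow> ('h \<Rightarrow> 'h) \<Rightarrow> bool" where
  "has_adj S R \<longleftrightarrow> (\<forall>x y. inner (S x) y = inner x (R y))"

lemma inner_ext:
  fixes u v :: "'h::real_inner"
  assumes "\<And>x. inner x u = inner x v" shows "u = v"
proof -
  have "inner (u - v) (u - v) = 0" using assms[of "u - v"] by (simp add: inner_diff_right)
  then show ?thesis by simp
qed

lemma adj_exists:
  fixes S :: "'h::{real_inner,complete_space} \<Rightarrow> 'h"
  assumes "bounded_linear S" shows "\<exists>R. has_adj S R"
proof -
  have "\<forall>y. \<exists>w. \<forall>x. inner (S x) y = inner w x"
  proof
    fix y
    have "bounded_linear (\<lambda>x. inner (S x) y)"
      using bounded_linear_compose[OF bounded_linear_inner_left assms] by simp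
    then show "\<exists>w. \<forall>x. inner (S x) y = inner w x" by (rule riesz)
  qed
  then obtain R where "\<forall>y x. inner (S x) y = inner (R y) x" by metis
  then have "has_adj S R" by (simp add: has_adj_def inner_commute)
  then show ?thesis by blast
qed

lemma adj_unique: "has_adj S R \<Longrightarrow> has_adj S R' \<Longrightarrow> R = R'"
  unfolding has_adj_def by (metis inner_ext ext)

lemma adjoint_op_eq: "has_adj S R \<Longrightarrow> adjoint_op S = R"
proof -
  assume h: "has_adj S R"
  then have "\<exists>S'. \<forall>x y. inner (S x) y = inner x (S' y)" unfolding has_adj_def by blast
  then have "has_adj S (adjoint_op S)" unfolding adjoint_op_def has_adj_def by (rule someI_ex)
  then show ?thesis using adj_unique h by blast
qed

lemma adj_sym: "has_adj S R \<Longrightarrow> has_adj R S"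
  unfolding has_adj_def by (metis inner_commute)

lemma adj_linear:
  assumes "has_adj S R" and "linear S" shows "linear R"
proof (rule linearI)
  fix b1 b2
  show "R (b1 + b2) = R b1 + R b2"
  proof (rule inner_ext)
    fix x
    show "inner x (R (b1 + b2)) = inner x (R b1 + R b2)"
      using assms(1) unfolding has_adj_def by (metis inner_add_right)
  qed
next
  fix r b
  show "R (r *\<^sub>R b) = r *\<^sub>R R b"
  proof (rule inner_ext)
    fix x
    show "inner x (R (r *\<^sub>R b)) = inner x (r *\<^sub>R R b)"
      using assms(1) unfolding has_adj_def by (metis inner_scaleR_right)
  qed
qed

lemma adj_bound:
  assumes bl: "bounded_linear S" and h: "has_adj S R"
  shows "norm (R y) \<le> onorm S * norm y"
proof -
  have "norm (R y)^2 = inner (S (R y)) y" using h unfolding has_adj_def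
    by (simp add: power2_norm_eq_inner)
  also have "\<dots> \<le> norm (S (R y)) * norm y" by (rule norm_cauchy_schwarz)
  also have "\<dots> \<le> onorm S * norm (R y) * norm y"
    by (intro mult_right_mono onorm[OF bl]) simp
  finally have *: "norm (R y) * norm (R y) \<le> (onorm S * norm y) * norm (R y)"
    by (simp add: power2_eq_square algebra_simps)
  show ?thesis
  proof (cases "norm (R y) = 0")
    case True
    then show ?thesis using onorm_pos_le[OF bl] by simp
  next
    case False
    then show ?thesis using * by (simp add: mult_le_cancel_right)
  qed
qed

lemma adj_bl:
  assumes bl: "bounded_linear S" and h: "has_adj S R"
  shows "bounded_linear R"
proof -
  have l: "linear R" using adj_linear[OF h] bl bounded_linear.linear by blast
  show ?thesis
    by (rule bounded_linear_intro[where K = "onorm S"])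
       (auto simp: real_vector.linear_add[OF l] linear_cmul[OF l] adj_bound[OF bl h] mult.commute)
qed

lemma onorm_cube:
  fixes A :: "'h::{real_inner,complete_space} \<Rightarrow> 'h"
  assumes bl: "bounded_linear A" and h: "has_adj A A'"
  shows "onorm (\<lambda>z. A (A' (A z))) = onorm A ^ 3"
proof -
  have bl': "bounded_linear A'" by (rule adj_bl[OF bl h])
  let ?N = "onorm A"
  have N0: "?N \<ge> 0" by (rule onorm_pos_le[OF bl])
  have blc: "bounded_linear (\<lambda>z. A (A' (A z)))"
    using bounded_linear_compose[OF bl bounded_linear_compose[OF bl' bl]] by simp
  let ?M = "onorm (\<lambda>z. A (A' (A z)))"
  have M0: "?M \<ge> 0" by (rule onorm_pos_le[OF blc])
  have up: "?M \<le> ?N ^ 3"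
  proof (rule onorm_bound)
    show "0 \<le> ?N ^ 3" using N0 by simp
    fix x
    have "norm (A (A' (A x))) \<le> ?N * norm (A' (A x))" by (rule onorm[OF bl])
    also have "\<dots> \<le> ?N * (?N * norm (A x))" by (intro mult_left_mono adj_bound[OF bl h] N0)
    also have "\<dots> \<le> ?N * (?N * (?N * norm x))"
      by (intro mult_left_mono onorm[OF bl] N0)
    finally show "norm (A (A' (A x))) \<le> ?N ^ 3 * norm x" by (simp add: power3_eq_cube algebra_simps)
  qed
  have pt: "norm (A x) \<le> root 3 ?M * norm x" for x
  proof -
    have a: "norm (A x)^2 \<le> norm x * norm (A' (A x))"
    proof -
      have "norm (A x)^2 = inner x (A' (A x))" using h unfolding has_adj_def
        by (simp add: power2_norm_eq_inner)
      also have "\<dots> \<le> norm x * norm (A' (A x))" by (rule norm_cauchy_schwarz)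
      finally show ?thesis .
    qed
    have b: "norm (A' (A x))^2 \<le> ?M * norm x * norm (A x)"
    proof -
      have "norm (A' (A x))^2 = inner (A (A' (A x))) (A x)" using h unfolding has_adj_def
        by (simp add: power2_norm_eq_inner)
      also have "\<dots> \<le> norm (A (A' (A x))) * norm (A x)" by (rule norm_cauchy_schwarz)
      also have "\<dots> \<le> ?M * norm x * norm (A x)" by (intro mult_right_mono onorm[OF blc]) simp
      finally show ?thesis .
    qed
    have "(norm (A x)^2)^2 \<le> (norm x * norm (A' (A x)))^2"
      using a by (intro power_mono) auto
    also have "\<dots> = norm x ^2 * norm (A' (A x))^2" by (simp add: power_mult_distrib)
    also have "\<dots> \<le> norm x ^2 * (?M * norm x * norm (A x))" by (intro mult_left_mono b) simp
    finally have c: "norm (A x) * norm (A x)^3 \<le> norm (A x) * (?M * norm x ^3)"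
      by (simp add: power2_eq_square power3_eq_cube algebra_simps)
    have d: "norm (A x)^3 \<le> ?M * norm x ^3"
    proof (cases "norm (A x) = 0")
      case True then show ?thesis using M0 by simp
    next
      case False then show ?thesis using c by (simp add: mult_le_cancel_left)
    qed
    have "norm (A x)^3 \<le> (root 3 ?M * norm x)^3"
      using d M0 by (simp add: power_mult_distrib)
    then have "root 3 (norm (A x)^3) \<le> root 3 ((root 3 ?M * norm x)^3)" by simp
    then show ?thesis using M0 by (simp add: real_root_power_cancel)
  qed
  have "?N \<le> root 3 ?M" by (rule onorm_bound) (use pt M0 in \<open>simp_all add: mult.commute\<close>)
  then have "?N ^3 \<le> root 3 ?M ^ 3" by (intro power_mono N0)
  also have "\<dots> = ?M" using M0 by simp
  finally show ?thesis using up by simp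
qed

lemma sup_cube:
  fixes g :: "'i \<Rightarrow> real"
  assumes g0: "\<And>i. g i \<ge> 0" and bdd: "bdd_above (range g)"
  shows "(SUP i. g i ^ 3) = (SUP i. g i) ^ 3"
proof -
  let ?s = "SUP i. g i"
  have gs: "g i \<le> ?s" for i using bdd by (simp add: cSUP_upper)
  have s0: "?s \<ge> 0" using gs[of undefined] g0[of undefined] by linarith
  have g3: "g i ^3 \<le> ?s ^3" for i using gs g0 by (intro power_mono)
  have bdd3: "bdd_above (range (\<lambda>i. g i ^3))" using g3 by (intro bdd_aboveI2) 
  let ?t = "SUP i. g i ^ 3"
  have le1: "?t \<le> ?s ^3" using g3 by (intro cSUP_least) auto
  have "g i \<le> root 3 ?t" for i
  proof -
    have "g i ^3 \<le> ?t" by (rule cSUP_upper[OF UNIV_I bdd3])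
    then have "root 3 (g i ^3) \<le> root 3 ?t" by simp
    then show ?thesis using g0[of i] by (simp add: real_root_power_cancel)
  qed
  then have "?s \<le> root 3 ?t" by (intro cSUP_least) auto
  then have "?s ^3 \<le> root 3 ?t ^3" using s0 by (intro power_mono)
  also have "\<dots> = ?t"
  proof -
    have "?t \<ge> g undefined ^3" by (rule cSUP_upper[OF UNIV_I bdd3])
    then have "?t \<ge> 0" using g0[of undefined] by (smt (verit) zero_le_power)
    then show ?thesis by simp
  qed
  finally show ?thesis using le1 by simp
qed


definition good_triple :: "('a::real_normed_vector \<Rightarrow> 'a \<Rightarrow> 'a \<Rightarrow> 'a) \<Rightarrow> bool" where
  "good_triple T \<longleftrightarrow> (\<forall>b c. linear (\<lambda>a. T a b c)) \<and> (\<forall>a c. linear (\<lambda>b. T a b c))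
    \<and> (\<forall>a b c. T a b c = T c b a)
    \<and> (\<forall>a b x y z. T a b (T x y z) - T x y (T a b z) = T (T a b x) y z - T x (T b a y) z)
    \<and> (\<forall>a. norm (T a a a) = norm a ^ 3)"

lemma gt_sym: "good_triple T \<Longrightarrow> T a b c = T c b a"
  unfolding good_triple_def by blast

lemma gt_lin1: "good_triple T \<Longrightarrow> linear (\<lambda>a. T a b c)"
  unfolding good_triple_def by blast
lemma gt_lin2: "good_triple T \<Longrightarrow> linear (\<lambda>b. T a b c)"
  unfolding good_triple_def by blast
lemma gt_lin3: "good_triple T \<Longrightarrow> linear (\<lambda>c. T a b c)"
proof -
  assume G: "good_triple T"
  have "(\<lambda>c. T a b c) = (\<lambda>c. T c b a)" using gt_sym[OF G] by auto
  then show ?thesis using gt_lin1[OF G] by simp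
qed

lemma gt_jordan: "good_triple T \<Longrightarrow>
   T a b (T x y z) = T (T a b x) y z - T x (T b a y) z + T x y (T a b z)"
  unfolding good_triple_def by (metis diff_add_cancel)

lemma gt_norm: "good_triple T \<Longrightarrow> norm (T a a a) = norm a ^ 3"
  unfolding good_triple_def by blast

lemma gt_s0: "good_triple T \<Longrightarrow> T (a+a') b c = T a b c + T a' b c"
  by (rule real_vector.linear_add[OF gt_lin1])

lemma gt_s1: "good_triple T \<Longrightarrow> T a (b+b') c = T a b c + T a b' c"
  by (rule real_vector.linear_add[OF gt_lin2])

lemma gt_s2: "good_triple T \<Longrightarrow> T a b (c+c') = T a b c + T a b c'"
  by (rule real_vector.linear_add[OF gt_lin3])

lemma gt_s3: "good_triple T \<Longrightarrow> T (r *\<^sub>R a) b c = r *\<^sub>R T a b c"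
  by (rule linear_cmul[OF gt_lin1])

lemma gt_s4: "good_triple T \<Longrightarrow> T a (r *\<^sub>R b) c = r *\<^sub>R T a b c"
  by (rule linear_cmul[OF gt_lin2])

lemma gt_s5: "good_triple T \<Longrightarrow> T a b (r *\<^sub>R c) = r *\<^sub>R T a b c"
  by (rule linear_cmul[OF gt_lin3])

lemma gt_s6: "good_triple T \<Longrightarrow> T 0 b c = 0"
  by (rule real_vector.linear_0[OF gt_lin1])

lemma gt_s7: "good_triple T \<Longrightarrow> T a 0 c = 0"
  by (rule real_vector.linear_0[OF gt_lin2])

lemma gt_s8: "good_triple T \<Longrightarrow> T a b 0 = 0"
  by (rule real_vector.linear_0[OF gt_lin3])

lemma gt_s9: "good_triple T \<Longrightarrow> T (-a) b c = - T a b c"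
  by (rule real_vector.linear_neg[OF gt_lin1])

lemma gt_s10: "good_triple T \<Longrightarrow> T a (-b) c = - T a b c"
  by (rule real_vector.linear_neg[OF gt_lin2])

lemma gt_s11: "good_triple T \<Longrightarrow> T a b (-c) = - T a b c"
  by (rule real_vector.linear_neg[OF gt_lin3])

lemma gt_s12: "good_triple T \<Longrightarrow> T (a-a') b c = T a b c - T a' b c"
  by (rule real_vector.linear_diff[OF gt_lin1])

lemma gt_s13: "good_triple T \<Longrightarrow> T a (b-b') c = T a b c - T a b' c"
  by (rule real_vector.linear_diff[OF gt_lin2])

lemma gt_s14: "good_triple T \<Longrightarrow> T a b (c-c') = T a b c - T a b c'"
  by (rule real_vector.linear_diff[OF gt_lin3])

lemmas gt_simps = gt_s0 gt_s1 gt_s2 gt_s3 gt_s4 gt_s5 gt_s6 gt_s7 gt_s8 gt_s9 gt_s10 gt_s11 gt_s12 gt_s13 gt_s14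

lemma three_scale: "(3::real) *\<^sub>R (X::'a::real_vector) = X + X + X"
proof -
  have "(3::real) *\<^sub>R X = (1 + 1 + 1) *\<^sub>R X" by simp
  also have "\<dots> = X + X + X" by (simp only: scaleR_add_left scaleR_one)
  finally show ?thesis .
qed
lemma lc3:
  fixes A B Q :: "'a::real_vector"
  assumes "A + B = Q + Q" "Q + B = A + A" shows "A = Q"
proof -
  have "(A + B) - (Q + B) = (Q + Q) - (A + A)" using assms by simp
  then have D: "A - Q = - ((A - Q) + (A - Q))" by (simp add: algebra_simps)
  have "(3::real) *\<^sub>R (A - Q) = (A - Q) + (A - Q) + (A - Q)" by (rule three_scale)
  also have "\<dots> = 0" using D by (metis add.commute add.right_inverse add.assoc)
  finally show ?thesis by simp
qed


lemma lc_fin: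
  fixes a b c :: "'a::real_vector"
  assumes "2 *\<^sub>R a - b = 2 *\<^sub>R b - c" shows "2 *\<^sub>R a - 3 *\<^sub>R b + c = 0"
proof -
  have "2 *\<^sub>R a - 3 *\<^sub>R b + c = (2 *\<^sub>R a - b) - (2 *\<^sub>R b - c)"
    by (simp add: algebra_simps three_scale scaleR_2)
  then show ?thesis using assms by simp
qed

lemma lcA:
  fixes A B Q :: "'a::real_vector"
  assumes "A = Q - B + Q" "Q = A - B + A" shows "A = Q"
proof (rule lc3)
  show "A + B = Q + Q" using assms(1) by (metis add.commute diff_add_cancel add.assoc)
  show "Q + B = A + A" using assms(2) by (metis add.commute diff_add_cancel add.assoc)
qed

lemma lcB:
  fixes x y q :: "'a::real_vector"
  assumes "x = y - q + y" shows "q = 2 *\<^sub>R y - x"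
  using assms by (simp add: scaleR_2 algebra_simps)

lemma gt_cubic:
  assumes G: "good_triple T" and e: "T e e e = e"
  shows "2 *\<^sub>R T e e (T e e (T e e z)) - 3 *\<^sub>R T e e (T e e z) + T e e z = 0"
proof -
  note S = gt_simps[OF G]
  have LQ: "T e e (T e w e) = T e w e" for w
  proof -
    have J1: "T e e (T e w e) = T e w e - T e (T e e w) e + T e w e"
      using gt_jordan[OF G, of e e e w e] e by simp
    have J2: "T e w e = T e e (T e w e) - T e (T e e w) e + T e e (T e w e)"
      using gt_jordan[OF G, of e w e e e] e gt_sym[OF G, of "T e w e" e e] gt_sym[OF G, of w e e]
      by simp
    from J1 J2 show ?thesis by (rule lcA)
  qed
  have J3: "T e (T e z e) e = 2 *\<^sub>R T e e (T e e z) - T e e z"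
  proof -
    have "T e e z = T e e (T e e z) - T e (T e z e) e + T e e (T e e z)"
      using gt_jordan[OF G, of z e e e e] e gt_sym[OF G, of z e e] gt_sym[OF G, of "T e e z" e e]
      by simp
    then show ?thesis by (rule lcB)
  qed
  have "T e e (T e (T e z e) e) = T e (T e z e) e" by (rule LQ)
  then have "T e e (2 *\<^sub>R T e e (T e e z) - T e e z) = 2 *\<^sub>R T e e (T e e z) - T e e z"
    unfolding J3 .
  then have "2 *\<^sub>R T e e (T e e (T e e z)) - T e e (T e e z) = 2 *\<^sub>R T e e (T e e z) - T e e z"
    by (simp only: S)
  then show ?thesis by (rule lc_fin)
qed
lemma gt_eigen0:
  assumes G: "good_triple T" and e: "T e e e = e" and w: "T e e w = \<mu> *\<^sub>R w"
    and m: "2*\<mu>^3 - 3*\<mu>^2 + \<mu> \<noteq> 0"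
  shows "w = 0"
proof -
  note S = gt_simps[OF G]
  have "2 *\<^sub>R T e e (T e e (T e e w)) - 3 *\<^sub>R T e e (T e e w) + T e e w = 0"
    by (rule gt_cubic[OF G e])
  then have "(2*\<mu>^3 - 3*\<mu>^2 + \<mu>) *\<^sub>R w = 0"
    using w S by (simp add: algebra_simps power2_eq_square power3_eq_cube)
  with m show ?thesis by simp
qed

lemma gt_peirce:
  assumes G: "good_triple T" and e: "T e e e = e" and x: "T e e x = 0"
  shows "T e x e = 0" "T x e x = 0" "T e x x = 0" "T e e (T x x x) = 0"
proof -
  note S = gt_simps[OF G]
  have "T e e (T e x e) = 2 *\<^sub>R T e x e"
    using gt_jordan[OF G, of e e e x e] e x S by (simp add: scaleR_2)
  then show "T e x e = 0" by (rule gt_eigen0[OF G e]) simp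
  have "T e e (T x e x) = (-1) *\<^sub>R T x e x"
    using gt_jordan[OF G, of e e x e x] e x S by simp
  then show "T x e x = 0" by (rule gt_eigen0[OF G e]) simp
  have xee: "T x e e = 0" using x gt_sym[OF G, of x e e] by simp
  have a: "T e e (T e x x) = T e x x"
    using gt_jordan[OF G, of e e e x x] e x S by simp
  have exe: "T e x e = 0" using \<open>T e x e = 0\<close> .
  have b: "T (T e x x) e e = 0"
    using gt_jordan[OF G, of e x x e e] xee exe S by simp
  have "T e e (T e x x) = 0" using b gt_sym[OF G, of "T e x x" e e] by simp
  with a show "T e x x = 0" by simp
  show "T e e (T x x x) = 0"
    using gt_jordan[OF G, of e e x x x] x S by simp
qed

lemma gt_expand:
  assumes G: "good_triple T" and e: "T e e e = e" and x: "T e e x = 0"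
  shows "T (e + x) (e + x) (e + x) = e + T x x x"
proof -
  note S = gt_simps[OF G]
  note P = gt_peirce[OF G e x]
  have "T x e e = 0" using x gt_sym[OF G, of x e e] by simp
  moreover have "T x x e = 0" using P(3) gt_sym[OF G, of x x e] by simp
  ultimately show ?thesis using S P e x by simp
qed

lemma gt_iter:
  assumes G: "good_triple T" and e: "T e e e = e" and x: "T e e x = 0"
  shows "((\<lambda>w. T w w w) ^^ n) (e + x) = e + ((\<lambda>w. T w w w) ^^ n) x
     \<and> T e e (((\<lambda>w. T w w w) ^^ n) x) = 0"
proof (induction n)
  case 0
  then show ?case using x by simp
next
  case (Suc n)
  then show ?case using gt_expand[OF G e] gt_peirce(4)[OF G e] by simp
qed

lemma gt_iter_norm:
  assumes G: "good_triple T"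
  shows "norm (((\<lambda>w. T w w w) ^^ n) x) = norm x ^ (3 ^ n)"
proof (induction n)
  case 0
  then show ?case by simp
next
  case (Suc n)
  then show ?case using gt_norm[OF G] by (simp add: power_mult[symmetric] mult.commute)
qed

lemma gt_trip_norm:
  assumes G: "good_triple T" and e: "T e e e = e"
  shows "norm e \<le> 1"
proof -
  have "norm e ^ 3 = norm e" using gt_norm[OF G, of e] e by simp
  then have "norm e * (norm e - 1) * (norm e + 1) = 0"
    by (simp add: algebra_simps power3_eq_cube)
  then show ?thesis by (auto simp: add_nonneg_eq_0_iff)
qed

lemma pow_bound_le1:
  fixes a :: real
  assumes "0 \<le> a" and "\<And>n. a ^ (3 ^ n) \<le> 2"
  shows "a \<le> 1"
proof (rule ccontr)
  assume "\<not> a \<le> 1"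
  then have a1: "a > 1" by simp
  obtain n :: nat where n: "real n > 1 / (a - 1)" using reals_Archimedean2 by blast
  have "1 + real n * (a - 1) \<le> (1 + (a - 1)) ^ n"
    by (rule Bernoulli_inequality) (use a1 in simp)
  also have "\<dots> = a ^ n" by simp
  also have "\<dots> \<le> a ^ (3 ^ n)"
    using a1 by (intro power_increasing) (auto intro: less_imp_le[OF less_exp])
  also have "\<dots> \<le> 2" by (rule assms(2))
  finally have "real n * (a - 1) \<le> 1" by simp
  moreover have "real n * (a - 1) > 1" using n a1 by (simp add: field_simps)
  ultimately show False by simp
qed

lemma gt_sum_norm:
  assumes G: "good_triple T" and e: "T e e e = e" and x: "T e e x = 0" and nx: "norm x \<le> 1"
  shows "norm (e + x) \<le> 1"
proof (rule pow_bound_le1)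
  show "0 \<le> norm (e + x)" by simp
  fix n :: nat
  let ?c = "(\<lambda>w. T w w w) ^^ n"
  have "norm (e + x) ^ (3 ^ n) = norm (?c (e + x))" using gt_iter_norm[OF G] by simp
  also have "\<dots> = norm (e + ?c x)" using gt_iter[OF G e x] by simp
  also have "\<dots> \<le> norm e + norm (?c x)" by (rule norm_triangle_ineq)
  also have "\<dots> \<le> 1 + 1"
    using gt_trip_norm[OF G e] gt_iter_norm[OF G, of n x] nx
    by (intro add_mono) (auto intro: power_le_one)
  finally show "norm (e + x) ^ (3 ^ n) \<le> 2" by simp
qed

lemma gt_orth_sum:
  assumes G: "good_triple T" and fin: "finite S"
    and orth: "\<forall>u\<in>S. \<forall>v\<in>S. u \<noteq> v \<longrightarrow> orth T u v"
    and u: "u \<in> S"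
  shows "T u (\<Sum>S) c = T u u c" "T u u (\<Sum>S) = T u u u"
proof -
  have "T u (\<Sum>S) c = (\<Sum>v\<in>S. T u v c)"
    using real_vector.linear_sum[OF gt_lin2[OF G, of u c], of "\<lambda>x. x" S] by simp
  also have "\<dots> = T u u c + (\<Sum>v\<in>S - {u}. T u v c)"
    using fin u by (simp add: sum.remove)
  also have "(\<Sum>v\<in>S - {u}. T u v c) = 0"
  proof (intro sum.neutral ballI)
    fix v assume v: "v \<in> S - {u}"
    then have "orth T u v" using orth u by auto
    then show "T u v c = 0" by (simp add: orth_def)
  qed
  finally show "T u (\<Sum>S) c = T u u c" by simp
  have "T u u (\<Sum>S) = (\<Sum>v\<in>S. T u u v)"
    using real_vector.linear_sum[OF gt_lin3[OF G, of u u], of "\<lambda>x. x" S] by simp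
  also have "\<dots> = T u u u + (\<Sum>v\<in>S - {u}. T u u v)"
    using fin u by (simp add: sum.remove)
  also have "(\<Sum>v\<in>S - {u}. T u u v) = 0"
  proof (intro sum.neutral ballI)
    fix v assume v: "v \<in> S - {u}"
    then have "orth T v u" using orth u by auto
    then show "T u u v = 0" using gt_sym[OF G, of u u v] by (simp add: orth_def)
  qed
  finally show "T u u (\<Sum>S) = T u u u" by simp
qed

lemma gt_frt_trip:
  assumes G: "good_triple T" and e: "finite_rank_tripotent J T e"
  shows "T e e e = e"
proof -
  obtain S where fin: "finite S" and min: "\<forall>u\<in>S. minimal_tripotent J T u"
    and orth: "\<forall>u\<in>S. \<forall>v\<in>S. u \<noteq> v \<longrightarrow> orth T u v" and eS: "e = \<Sum>S"
    using e unfolding finite_rank_tripotent_def by blast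
  have "T (\<Sum>S) (\<Sum>S) (\<Sum>S) = (\<Sum>u\<in>S. T u (\<Sum>S) (\<Sum>S))"
    using real_vector.linear_sum[OF gt_lin1[OF G, of "\<Sum>S" "\<Sum>S"], of "\<lambda>x. x" S] by simp
  also have "\<dots> = (\<Sum>u\<in>S. u)"
  proof (rule sum.cong)
    fix u assume u: "u \<in> S"
    have "T u u u = u" using min u by (simp add: minimal_tripotent_def tripotent_def)
    then show "T u (\<Sum>S) (\<Sum>S) = u" using gt_orth_sum[OF G fin orth u] by simp
  qed simp
  finally show ?thesis using eS by simp
qed

lemma gt_orth_E0:
  assumes G: "good_triple T" and o: "orth T e1 e2"
  shows "T e1 e1 e2 = 0" "T e2 e2 e1 = 0"
proof -
  note S = gt_simps[OF G]
  let ?v = "T e2 e1 e1"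
  have "\<And>x y z. T x (T e2 e1 y) z = 0"
  proof -
    fix x y z
    show "T x (T e2 e1 y) z = 0"
      using gt_jordan[OF G, of e1 e2 x y z] o S by (simp add: orth_def)
  qed
  then have "T ?v ?v ?v = 0" by blast
  then have "norm ?v = 0" using gt_norm[OF G, of ?v] by simp
  then show "T e1 e1 e2 = 0" using gt_sym[OF G, of e1 e1 e2] by simp
  show "T e2 e2 e1 = 0" using gt_sym[OF G, of e2 e2 e1] o by (simp add: orth_def)
qed

lemma peirce0: "peirce T e 0 = {x. T e e x = 0}"
  by (simp add: peirce_def)

lemma main_generic:
  fixes TE :: "'a::real_normed_vector \<Rightarrow> 'a \<Rightarrow> 'a \<Rightarrow> 'a" and f :: "'a \<Rightarrow> 'b::real_normed_vector"
    and T1 T2 :: "'a \<Rightarrow> 'b"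
  assumes G: "good_triple TE"
    and e1: "finite_rank_tripotent JE TE e1"
    and e2: "finite_rank_tripotent JE TE e2"
    and e12: "orth TE e1 e2"
    and T1_add: "\<forall>x\<in>peirce TE e1 0. \<forall>y\<in>peirce TE e1 0. T1 (x + y) = T1 x + T1 y"
    and T1_scale: "\<forall>r. \<forall>x\<in>peirce TE e1 0. T1 (r *\<^sub>R x) = r *\<^sub>R T1 x"
    and T1_f: "\<forall>x\<in>peirce TE e1 0. norm x \<le> 1 \<longrightarrow> f (e1 + x) = f e1 + T1 x"
    and T2_add: "\<forall>x\<in>peirce TE e2 0. \<forall>y\<in>peirce TE e2 0. T2 (x + y) = T2 x + T2 y"
    and T2_scale: "\<forall>r. \<forall>x\<in>peirce TE e2 0. T2 (r *\<^sub>R x) = r *\<^sub>R T2 x"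
    and T2_f: "\<forall>x\<in>peirce TE e2 0. norm x \<le> 1 \<longrightarrow> f (e2 + x) = f e2 + T2 x"
  shows "\<forall>x \<in> peirce TE e1 0 \<inter> peirce TE e2 0. T1 x = T2 x"
proof
  note S = gt_simps[OF G]
  have t1: "TE e1 e1 e1 = e1" by (rule gt_frt_trip[OF G e1])
  have t2: "TE e2 e2 e2 = e2" by (rule gt_frt_trip[OF G e2])
  note o = gt_orth_E0[OF G e12]
  fix x assume "x \<in> peirce TE e1 0 \<inter> peirce TE e2 0"
  then have x1: "TE e1 e1 x = 0" and x2: "TE e2 e2 x = 0" by (auto simp: peirce0)
  define s where "s = 1 / (norm x + 1)"
  have np: "norm x + 1 > 0" using norm_ge_zero[of x] by linarith
  have s0: "s > 0" using np by (simp add: s_def)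
  define y where "y = s *\<^sub>R x"
  have ny: "norm y \<le> 1" using np by (auto simp: y_def s_def divide_le_eq_1)
  have y1: "TE e1 e1 y = 0" and y2: "TE e2 e2 y = 0" using x1 x2 S by (auto simp: y_def)
  have A1: "f (e1 + (e2 + y)) = f e1 + T1 (e2 + y)"
    using T1_f gt_sum_norm[OF G t2 y2 ny] o y1 S by (simp add: peirce0)
  have A2: "f (e2 + (e1 + y)) = f e2 + T2 (e1 + y)"
    using T2_f gt_sum_norm[OF G t1 y1 ny] o y2 S by (simp add: peirce0)
  have B1: "f (e1 + e2) = f e1 + T1 e2"
    using T1_f gt_trip_norm[OF G t2] o by (simp add: peirce0)
  have B2: "f (e2 + e1) = f e2 + T2 e1"
    using T2_f gt_trip_norm[OF G t1] o by (simp add: peirce0)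
  have C1: "T1 (e2 + y) = T1 e2 + T1 y" using T1_add o y1 by (simp add: peirce0)
  have C2: "T2 (e1 + y) = T2 e1 + T2 y" using T2_add o y2 by (simp add: peirce0)
  have eq: "e1 + (e2 + y) = e2 + (e1 + y)" by (simp add: algebra_simps)
  have "f e1 + (T1 e2 + T1 y) = f e2 + (T2 e1 + T2 y)"
    using A1 A2 C1 C2 eq by metis
  then have "f e1 + T1 e2 + T1 y = f e2 + T2 e1 + T2 y"
    by (simp add: add.assoc)
  moreover have "f e1 + T1 e2 = f e2 + T2 e1" using B1 B2 by (simp add: add.commute)
  ultimately have "T1 y = T2 y" by simp
  moreover have "T1 y = s *\<^sub>R T1 x" using T1_scale x1 by (simp add: peirce0 y_def)
  moreover have "T2 y = s *\<^sub>R T2 x" using T2_scale x2 by (simp add: peirce0 y_def)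
  ultimately show "T1 x = T2 x" using s0 by simp
qed


lemma bl_from_compact:
  fixes S :: "'h::real_normed_vector \<Rightarrow> 'h"
  assumes l: "linear S" and c: "compact (closure (S ` ball 0 1))"
  shows "bounded_linear S"
proof -
  have "bounded (closure (S ` ball 0 1))" using c by (rule compact_imp_bounded)
  then have "bounded (S ` ball 0 1)" using closure_subset bounded_subset by blast
  then obtain b where b0: "b > 0" and b: "\<And>y. y \<in> S ` ball 0 1 \<Longrightarrow> norm y \<le> b"
    unfolding bounded_pos by blast
  have "norm (S x) \<le> norm x * (2*b)" for x
  proof (cases "x = 0")
    case True then show ?thesis using real_vector.linear_0[OF l] by simp
  next
    case False
    let ?x = "(1/(2*norm x)) *\<^sub>R x"
    have "?x \<in> ball 0 1" using False by simp
    then have "norm (S ?x) \<le> b" using b by blast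
    then have "(1/(2*norm x)) * norm (S x) \<le> b" using False by (simp add: linear_cmul[OF l])
    then show ?thesis using False by (simp add: field_simps)
  qed
  then show ?thesis
    by (intro bounded_linear_intro[where K="2*b"])
       (auto simp: real_vector.linear_add[OF l] linear_cmul[OF l])
qed

lemma has_adj_adjoint_op:
  fixes S :: "'h::{real_inner,complete_space} \<Rightarrow> 'h"
  shows "bounded_linear S \<Longrightarrow> has_adj S (adjoint_op S)"
  using adj_exists adjoint_op_eq by metis

definition trop :: "('h::real_vector \<Rightarrow> 'h) \<Rightarrow> ('h \<Rightarrow> 'h) \<Rightarrow> ('h \<Rightarrow> 'h) \<Rightarrow> 'h \<Rightarrow> 'h" where
  "trop P Q R = (\<lambda>w. (1/2) *\<^sub>R (P (Q (R w)) + R (Q (P w))))"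

lemma op_jordan:
  fixes A B X Y Z A' B' Y' :: "'h::real_vector \<Rightarrow> 'h"
  assumes "linear A" "linear B" "linear X" "linear Y" "linear Z" "linear A'" "linear B'" "linear Y'"
  shows "trop A B' (trop X Y' Z) w - trop X Y' (trop A B' Z) w
       = trop (trop A B' X) Y' Z w - trop X (\<lambda>u. (1/2) *\<^sub>R (Y' (A (B' u)) + B' (A (Y' u)))) Z w"
proof -
  note L = real_vector.linear_add[OF assms(1)] linear_cmul[OF assms(1)]
    real_vector.linear_add[OF assms(2)] linear_cmul[OF assms(2)]
    real_vector.linear_add[OF assms(3)] linear_cmul[OF assms(3)]
    real_vector.linear_add[OF assms(4)] linear_cmul[OF assms(4)]
    real_vector.linear_add[OF assms(5)] linear_cmul[OF assms(5)]
    real_vector.linear_add[OF assms(6)] linear_cmul[OF assms(6)]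
    real_vector.linear_add[OF assms(7)] linear_cmul[OF assms(7)]
    real_vector.linear_add[OF assms(8)] linear_cmul[OF assms(8)]
  show ?thesis unfolding trop_def by (simp add: L algebra_simps)
qed

lemma has_adj_tr:
  assumes P: "has_adj P P'" and Q: "has_adj Q Q'" and R: "has_adj R R'"
  shows "has_adj (trop P Q' R) (trop R' Q P')"
  unfolding has_adj_def
proof (intro allI)
  fix x y
  have Q2: "has_adj Q' Q" by (rule adj_sym[OF Q])
  have "inner (P (Q' (R x))) y = inner x (R' (Q (P' y)))"
    using P Q2 R unfolding has_adj_def by simp
  moreover have "inner (R (Q' (P x))) y = inner x (P' (Q (R' y)))"
    using P Q2 R unfolding has_adj_def by simp
  ultimately show "inner (trop P Q' R x) y = inner x (trop R' Q P' y)"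
    unfolding trop_def by (simp add: inner_add_left inner_add_right)
qed

lemma has_adj_add:
  assumes "has_adj P P'" "has_adj Q Q'"
  shows "has_adj (\<lambda>z. P z + Q z) (\<lambda>z. P' z + Q' z)"
  using assms unfolding has_adj_def by (simp add: inner_add_left inner_add_right)

lemma has_adj_scale:
  assumes "has_adj P P'"
  shows "has_adj (\<lambda>z. r *\<^sub>R P z) (\<lambda>z. r *\<^sub>R P' z)"
  using assms unfolding has_adj_def by simp

lemma cstar_good:
  fixes J :: "'a::real_normed_vector \<Rightarrow> 'a" and T :: "'a \<Rightarrow> 'a \<Rightarrow> 'a \<Rightarrow> 'a"
    and Jh :: "'h::{real_inner,complete_space} \<Rightarrow> 'h" and H :: "'i \<Rightarrow> 'h set"
    and \<Phi> :: "'a \<Rightarrow> 'i \<Rightarrow> 'h \<Rightarrow> 'h"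
  assumes C: "compact_cstar J T Jh H \<Phi>"
  shows "good_triple T"
proof -
  have bij: "bij_betw \<Phi> UNIV (c0_sum Jh H)" using C unfolding compact_cstar_def by blast
  have inj: "inj \<Phi>" using bij by (simp add: bij_betw_def)
  have add: "\<And>a b. \<Phi> (a + b) = (\<lambda>i z. \<Phi> a i z + \<Phi> b i z)" using C unfolding compact_cstar_def by blast
  have scl: "\<And>r a. \<Phi> (r *\<^sub>R a) = (\<lambda>i z. r *\<^sub>R \<Phi> a i z)" using C unfolding compact_cstar_def by blast
  have nrm: "\<And>a. norm a = (SUP i. onorm (\<Phi> a i))" using C unfolding compact_cstar_def by blast
  have Td: "\<And>a b c. \<Phi> (T a b c) = (\<lambda>i z. (1/2) *\<^sub>R
          (\<Phi> a i (adjoint_op (\<Phi> b i) (\<Phi> c i z)) + \<Phi> c i (adjoint_op (\<Phi> b i) (\<Phi> a i z))))"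
    using C unfolding compact_cstar_def by blast
  have inc0: "\<Phi> a \<in> c0_sum Jh H" for a by (rule bij_betw_apply[OF bij]) simp
  have bl: "bounded_linear (\<Phi> a i)" for a i
  proof -
    have "\<Phi> a i \<in> compact_ops Jh (H i)" using inc0[of a] unfolding c0_sum_def by blast
    then have "linear (\<Phi> a i)" "compact (closure (\<Phi> a i ` ball 0 1))"
      unfolding compact_ops_def by blast+
    then show ?thesis by (rule bl_from_compact)
  qed
  have lin: "linear (\<Phi> a i)" for a i by (rule bounded_linear.linear[OF bl])
  have ha: "has_adj (\<Phi> a i) (adjoint_op (\<Phi> a i))" for a i by (rule has_adj_adjoint_op[OF bl])
  have lina: "linear (adjoint_op (\<Phi> a i))" for a i by (rule adj_linear[OF ha lin])
  have LA1: "\<Phi> a i (u + v) = \<Phi> a i u + \<Phi> a i v" for a i u v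
    by (rule real_vector.linear_add[OF lin])
  have LA2: "\<Phi> a i (r *\<^sub>R u) = r *\<^sub>R \<Phi> a i u" for a i u r
    by (rule linear_cmul[OF lin])
  have LA3: "adjoint_op (\<Phi> a i) (u + v) = adjoint_op (\<Phi> a i) u + adjoint_op (\<Phi> a i) v" for a i u v
    by (rule real_vector.linear_add[OF lina])
  have LA4: "adjoint_op (\<Phi> a i) (r *\<^sub>R u) = r *\<^sub>R adjoint_op (\<Phi> a i) u" for a i u r
    by (rule linear_cmul[OF lina])
  note LA = LA1 LA2 LA3 LA4
  have eqI: "x = y" if "\<And>i z. \<Phi> x i z = \<Phi> y i z" for x y
  proof -
    have "\<Phi> x = \<Phi> y" by (intro ext) (rule that)
    then show ?thesis by (rule injD[OF inj])
  qed
  have Td': "\<Phi> (T a b c) i = trop (\<Phi> a i) (adjoint_op (\<Phi> b i)) (\<Phi> c i)" for a b c i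
    by (simp add: Td trop_def)
  have adj_add: "adjoint_op (\<Phi> (a + b) i) = (\<lambda>z. adjoint_op (\<Phi> a i) z + adjoint_op (\<Phi> b i) z)" for a b i
    using adjoint_op_eq[OF has_adj_add[OF ha ha]] add by simp
  have adj_scl: "adjoint_op (\<Phi> (r *\<^sub>R a) i) = (\<lambda>z. r *\<^sub>R adjoint_op (\<Phi> a i) z)" for r a i
    using adjoint_op_eq[OF has_adj_scale[OF ha]] scl by simp
  have adj_add': "adjoint_op (\<lambda>z. \<Phi> a i z + \<Phi> b i z) = (\<lambda>z. adjoint_op (\<Phi> a i) z + adjoint_op (\<Phi> b i) z)" for a b i
    by (rule adjoint_op_eq[OF has_adj_add[OF ha ha]])
  have adj_scl': "adjoint_op (\<lambda>z. r *\<^sub>R \<Phi> a i z) = (\<lambda>z. r *\<^sub>R adjoint_op (\<Phi> a i) z)" for r a i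
    by (rule adjoint_op_eq[OF has_adj_scale[OF ha]])
  have dif: "\<Phi> (a - b) i z = \<Phi> a i z - \<Phi> b i z" for a b i z
  proof -
    have e: "a - b = a + (-1) *\<^sub>R b" by simp
    show ?thesis unfolding e add scl by simp
  qed
  have l1: "linear (\<lambda>a. T a b c)" for b c
  proof (rule linearI)
    fix a1 a2 show "T (a1 + a2) b c = T a1 b c + T a2 b c"
      by (rule eqI) (simp add: Td' trop_def add LA algebra_simps)
  next
    fix r a show "T (r *\<^sub>R a) b c = r *\<^sub>R T a b c"
      by (rule eqI) (simp add: Td' trop_def scl LA algebra_simps)
  qed
  have l2: "linear (\<lambda>b. T a b c)" for a c
  proof (rule linearI)
    fix b1 b2 show "T a (b1 + b2) c = T a b1 c + T a b2 c"
      by (rule eqI) (simp add: Td' trop_def add adj_add' LA algebra_simps)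
  next
    fix r b show "T a (r *\<^sub>R b) c = r *\<^sub>R T a b c"
      by (rule eqI) (simp add: Td' trop_def scl adj_scl' LA algebra_simps)
  qed
  have sym: "T a b c = T c b a" for a b c
    by (rule eqI) (simp add: Td' trop_def algebra_simps)
  have adjT: "adjoint_op (trop (\<Phi> b i) (adjoint_op (\<Phi> a i)) (\<Phi> y i))
      = (\<lambda>u. (1/2) *\<^sub>R (adjoint_op (\<Phi> y i) (\<Phi> a i (adjoint_op (\<Phi> b i) u))
        + adjoint_op (\<Phi> b i) (\<Phi> a i (adjoint_op (\<Phi> y i) u))))" for a b y i
  proof -
    have "adjoint_op (trop (\<Phi> b i) (adjoint_op (\<Phi> a i)) (\<Phi> y i))
       = trop (adjoint_op (\<Phi> y i)) (\<Phi> a i) (adjoint_op (\<Phi> b i))"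
      by (rule adjoint_op_eq[OF has_adj_tr[OF ha ha ha]])
    then show ?thesis by (simp add: trop_def)
  qed
  have jor: "T a b (T x y z) - T x y (T a b z) = T (T a b x) y z - T x (T b a y) z" for a b x y z
  proof (rule eqI)
    fix i w
    show "\<Phi> (T a b (T x y z) - T x y (T a b z)) i w = \<Phi> (T (T a b x) y z - T x (T b a y) z) i w"
      unfolding dif Td' adjT
      by (rule op_jordan[OF lin lin lin lin lin lina lina lina])
  qed
  have bdd: "bdd_above (range (\<lambda>i. onorm (\<Phi> a i)))" for a
  proof -
    have fin: "finite {i. 1 \<le> onorm (\<Phi> a i)}" using inc0[of a] by (simp add: c0_sum_def)
    let ?F = "{i. 1 \<le> onorm (\<Phi> a i)}"
    show ?thesis
    proof (rule bdd_aboveI2)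
      fix i
      show "onorm (\<Phi> a i) \<le> 1 + (\<Sum>j\<in>?F. onorm (\<Phi> a j))"
      proof (cases "i \<in> ?F")
        case True
        then have "onorm (\<Phi> a i) \<le> (\<Sum>j\<in>?F. onorm (\<Phi> a j))"
          using fin by (intro member_le_sum) (auto intro: onorm_pos_le[OF bl])
        then show ?thesis by simp
      next
        case False
        moreover have "(\<Sum>j\<in>?F. onorm (\<Phi> a j)) \<ge> 0" by (intro sum_nonneg onorm_pos_le[OF bl])
        ultimately show ?thesis by simp
      qed
    qed
  qed
  have nc: "norm (T a a a) = norm a ^ 3" for a
  proof -
    have "\<Phi> (T a a a) i = (\<lambda>z. \<Phi> a i (adjoint_op (\<Phi> a i) (\<Phi> a i z)))" for i
      by (simp add: Td' trop_def scaleR_2[symmetric])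
    then have "norm (T a a a) = (SUP i. onorm (\<Phi> a i) ^ 3)"
      using nrm[of "T a a a"] onorm_cube[OF bl ha] by simp
    also have "\<dots> = (SUP i. onorm (\<Phi> a i)) ^ 3"
      by (rule sup_cube) (auto intro: onorm_pos_le[OF bl] bdd)
    also have "\<dots> = norm a ^ 3" using nrm by simp
    finally show ?thesis .
  qed
  show ?thesis unfolding good_triple_def using l1 l2 sym jor nc by blast
qed


lemma jb_good: "jbstar_triple J T \<Longrightarrow> good_triple T"
  unfolding jbstar_triple_def good_triple_def by (elim conjE) (intro conjI; assumption)

theorem lemma3p11:
  fixes JE :: "'a::banach \<Rightarrow> 'a" and TE :: "'a \<Rightarrow> 'a \<Rightarrow> 'a \<Rightarrow> 'a"
    and JB :: "'b::banach \<Rightarrow> 'b" and TB :: "'b \<Rightarrow> 'b \<Rightarrow> 'b \<Rightarrow> 'b"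
    and f :: "'a \<Rightarrow> 'b" and e1 e2 :: 'a and T1 T2 :: "'a \<Rightarrow> 'b"
  assumes spaces:
    "(jbstar_triple JE TE \<and> jbstar_triple JB TB
        \<and> weakly_compact_triple TE \<and> weakly_compact_triple TB
        \<and> \<not> has_small_summand JE TE \<and> \<not> has_small_summand JB TB)
     \<or> ((\<exists>(JhE :: 'h1::{real_inner,complete_space} \<Rightarrow> 'h1) (HE :: 'i1 \<Rightarrow> 'h1 set) \<Phi>E.
            compact_cstar JE TE JhE HE \<Phi>E)
        \<and> (\<exists>(JhB :: 'h2::{real_inner,complete_space} \<Rightarrow> 'h2) (HB :: 'i2 \<Rightarrow> 'h2 set) \<Phi>B.
            compact_cstar JB TB JhB HB \<Phi>B))"
    and f_onto: "f ` sphere 0 1 = sphere 0 1"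
    and f_isom: "\<forall>x\<in>sphere 0 1. \<forall>y\<in>sphere 0 1. dist (f x) (f y) = dist x y"
    and e1: "finite_rank_tripotent JE TE e1"
    and e2: "finite_rank_tripotent JE TE e2"
    and e12: "orth TE e1 e2"
    and T1_onto: "T1 ` peirce TE e1 0 = peirce TB (f e1) 0"
    and T1_add: "\<forall>x\<in>peirce TE e1 0. \<forall>y\<in>peirce TE e1 0. T1 (x + y) = T1 x + T1 y"
    and T1_scale: "\<forall>r. \<forall>x\<in>peirce TE e1 0. T1 (r *\<^sub>R x) = r *\<^sub>R T1 x"
    and T1_isom: "\<forall>x\<in>peirce TE e1 0. norm (T1 x) = norm x"
    and T1_f: "\<forall>x\<in>peirce TE e1 0. norm x \<le> 1 \<longrightarrow> f (e1 + x) = f e1 + T1 x"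
    and T2_onto: "T2 ` peirce TE e2 0 = peirce TB (f e2) 0"
    and T2_add: "\<forall>x\<in>peirce TE e2 0. \<forall>y\<in>peirce TE e2 0. T2 (x + y) = T2 x + T2 y"
    and T2_scale: "\<forall>r. \<forall>x\<in>peirce TE e2 0. T2 (r *\<^sub>R x) = r *\<^sub>R T2 x"
    and T2_isom: "\<forall>x\<in>peirce TE e2 0. norm (T2 x) = norm x"
    and T2_f: "\<forall>x\<in>peirce TE e2 0. norm x \<le> 1 \<longrightarrow> f (e2 + x) = f e2 + T2 x"
  shows "\<forall>x \<in> peirce TE e1 0 \<inter> peirce TE e2 0. T1 x = T2 x"
proof -
  have G: "good_triple TE"
  proof (cases "jbstar_triple JE TE")
    case True then show ?thesis by (rule jb_good)
  next
    case False
    then obtain JhE :: "'h1 \<Rightarrow> 'h1" and HE :: "'i1 \<Rightarrow> 'h1 set" and \<Phi>E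
      where "compact_cstar JE TE JhE HE \<Phi>E" using spaces by blast
    then show ?thesis by (rule cstar_good)
  qed
  show ?thesis
    by (rule main_generic[OF G e1 e2 e12 T1_add T1_scale T1_f T2_add T2_scale T2_f])
qed

end
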